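(* Let $G\le\mathrm{O}(d)$ have closed orbits and let $z_1,\ldots,z_n\in\mathbb{R}^d$. Then the max filter bank $\Phi:\mathbb{R}^d/G\to\mathbb{R}^n$, $\Phi([x])=(\langle\!\langle[z_i],[x]\rangle\!\rangle)_{i=1}^n$, satisfies $$\sup_{\substack{[x],[y]\in\mathbb{R}^d/G\\ [x]\ne[y]}}\frac{\|\Phi([x])-\Phi([y])\|}{d([x],[y])}\le\sup_{g_1,\ldots,g_n\in G}\big\|[\,g_1z_1\ \cdots\ g_nz_n\,]\big\|_{2\to2}.$$ Moreover, equality holds if $-\mathrm{id}\in G$.
   Context: For $x\in\mathbb{R}^d$, $[x]:=\{gx:g\in G\}$; $\mathbb{R}^d/G$ is the set of orbits with quotient metric $d([x],[y]):=\inf_{p\in[x],q\in[y]}\|p-q\|$. Max filtering: $\langle\!\langle[x],[y]\rangle\!\rangle:=\sup_{p\in[x],q\in[y]}\langle p,q\rangle$. $[\,g_1z_1\ \cdots\ g_nz_n\,]$ is the $d\times n$ matrix with columns $g_iz_i$ and $\|\cdot\|_{2\to2}$ is the spectral norm. *)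

theory Defs
  imports "HOL-Analysis.Analysis"
begin

text \<open>A subgroup G of the orthogonal group O(d), with d = CARD('d), given as a set of
  orthogonal d x d matrices closed under identity, products and inverses (= transposes).\<close>
definition orth_subgroup :: "(real^'d^'d) set \<Rightarrow> bool" where
  "orth_subgroup G \<longleftrightarrow> G \<subseteq> {A. orthogonal_matrix A} \<and> mat 1 \<in> G \<and>
     (\<forall>A\<in>G. \<forall>B\<in>G. A ** B \<in> G) \<and> (\<forall>A\<in>G. transpose A \<in> G)"

definition orbit :: "(real^'d^'d) set \<Rightarrow> real^'d \<Rightarrow> (real^'d) set" where
  "orbit G x = (\<lambda>g. g *v x) ` G"

definition closed_orbits :: "(real^'d^'d) set \<Rightarrow> bool" where
  "closed_orbits G \<longleftrightarrow> (\<forall>x. closed (orbit G x))"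

definition qdist :: "(real^'d^'d) set \<Rightarrow> real^'d \<Rightarrow> real^'d \<Rightarrow> real" where
  "qdist G x y = Inf {norm (p - q) | p q. p \<in> orbit G x \<and> q \<in> orbit G y}"

definition max_filter :: "(real^'d^'d) set \<Rightarrow> real^'d \<Rightarrow> real^'d \<Rightarrow> real" where
  "max_filter G x y = Sup {p \<bullet> q | p q. p \<in> orbit G x \<and> q \<in> orbit G y}"

definition max_filter_bank ::
  "(real^'d^'d) set \<Rightarrow> ('n::finite \<Rightarrow> real^'d) \<Rightarrow> real^'d \<Rightarrow> real^'n" where
  "max_filter_bank G z x = (\<chi> i. max_filter G (z i) x)"

definition col_matrix ::
  "('n::finite \<Rightarrow> real^'d^'d) \<Rightarrow> ('n \<Rightarrow> real^'d) \<Rightarrow> real^'n^'d" where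
  "col_matrix g z = (\<chi> r c. (g c *v z c) $ r)"

definition spec_norm :: "real^'n^'m \<Rightarrow> real" where
  "spec_norm A = onorm (\<lambda>v. A *v v)"

end

theory Submission imports Defs begin

lemma adj: "((A::real^'n^'m) *v x) \<bullet> y = x \<bullet> (transpose A *v y)"
  by (metis dot_lmul_matrix inner_commute transpose_matrix_vector)

lemma orth_inner: "orthogonal_matrix (A::real^'n^'n) \<Longrightarrow> (A *v x) \<bullet> (A *v y) = x \<bullet> y"
  by (simp add: adj matrix_vector_mul_assoc orthogonal_matrix)

lemma orth_norm: "orthogonal_matrix (A::real^'n^'n) \<Longrightarrow> norm (A *v x) = norm x"
  by (simp add: norm_eq_sqrt_inner orth_inner)

lemma colT: "(transpose (col_matrix g z) *v u) $ i = (g i *v z i) \<bullet> u"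
  by (simp add: vector_matrix_mult_def col_matrix_def inner_vec_def mult.commute)

lemma col_bound: "spec_norm (col_matrix g z) \<le> real CARD('d) * real CARD('n) * (\<Sum>c\<in>UNIV. norm (z c))"
  if "\<And>i. orthogonal_matrix (g i)" for g :: "'n::finite \<Rightarrow> real^'d^'d"
  unfolding spec_norm_def
proof (rule onorm_le_matrix_component)
  fix r c
  have "\<bar>col_matrix g z $ r $ c\<bar> = \<bar>(g c *v z c) $ r\<bar>" by (simp add: col_matrix_def)
  also have "\<dots> \<le> norm (g c *v z c)" by (rule component_le_norm_cart)
  also have "\<dots> = norm (z c)" using that orth_norm by blast
  also have "\<dots> \<le> (\<Sum>c\<in>UNIV. norm (z c))" by (rule member_le_sum) auto
  finally show "\<bar>col_matrix g z $ r $ c\<bar> \<le> (\<Sum>c\<in>UNIV. norm (z c))" .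
qed

lemma specT: "norm (transpose M *v u) \<le> spec_norm M * norm u" for M :: "real^'n^'m"
proof -
  have "norm (transpose M *v u) ^ 2 = (M *v (transpose M *v u)) \<bullet> u"
    using adj[of M "transpose M *v u" u] by (simp add: power2_norm_eq_inner del: transpose_matrix_vector)
  also have "\<dots> \<le> norm (M *v (transpose M *v u)) * norm u" by (rule norm_cauchy_schwarz)
  also have "\<dots> \<le> spec_norm M * norm (transpose M *v u) * norm u"
    unfolding spec_norm_def by (intro mult_right_mono onorm) auto
  finally have h: "norm (transpose M *v u) ^ 2 \<le> spec_norm M * norm (transpose M *v u) * norm u" .
  show ?thesis
  proof (cases "norm (transpose M *v u) = 0")
    case True then show ?thesis unfolding spec_norm_def
      by (simp add: onorm_pos_le)
  next
    case False
    then have "0 < norm (transpose M *v u)" by simp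
    with h show ?thesis by (simp add: power2_eq_square)
  qed
qed

lemma G_orth: "orth_subgroup G \<Longrightarrow> g \<in> G \<Longrightarrow> orthogonal_matrix g"
  unfolding orth_subgroup_def by blast
lemma G_mul: "orth_subgroup G \<Longrightarrow> a \<in> G \<Longrightarrow> b \<in> G \<Longrightarrow> a ** b \<in> G"
  unfolding orth_subgroup_def by blast
lemma G_tr: "orth_subgroup G \<Longrightarrow> a \<in> G \<Longrightarrow> transpose a \<in> G"
  unfolding orth_subgroup_def by blast
lemma G_one: "orth_subgroup G \<Longrightarrow> mat 1 \<in> G"
  unfolding orth_subgroup_def by blast

lemma mf_set_eq: "{p \<bullet> q | p q. p \<in> orbit G z \<and> q \<in> orbit G x} = (\<lambda>(a,b). (a *v z) \<bullet> (b *v x)) ` (G \<times> G)"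
  unfolding orbit_def by auto

lemma mf_bdd: assumes "orth_subgroup G"
  shows "bdd_above {p \<bullet> q | p q. p \<in> orbit G z \<and> q \<in> orbit G x}"
proof (rule bdd_aboveI)
  fix t assume "t \<in> {p \<bullet> q | p q. p \<in> orbit G z \<and> q \<in> orbit G x}"
  then obtain a b where ab: "a \<in> G" "b \<in> G" "t = (a *v z) \<bullet> (b *v x)" unfolding orbit_def by auto
  have "t \<le> norm (a *v z) * norm (b *v x)" using ab(3) norm_cauchy_schwarz by blast
  also have "\<dots> = norm z * norm x" using ab assms G_orth orth_norm by metis
  finally show "t \<le> norm z * norm x" .
qed

lemma mf_ne: assumes "orth_subgroup G"
  shows "{p \<bullet> q | p q. p \<in> orbit G z \<and> q \<in> orbit G x} \<noteq> {}"
  using G_one[OF assms] unfolding orbit_def by blast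

lemma mf_upper: assumes "orth_subgroup G" "a \<in> G" "b \<in> G"
  shows "(a *v z) \<bullet> (b *v x) \<le> max_filter G z x"
  unfolding max_filter_def
  by (rule cSup_upper[OF _ mf_bdd[OF assms(1)]]) (use assms(2,3) in \<open>auto simp: orbit_def\<close>)

lemma mf_approx: assumes "orth_subgroup G" "e > 0"
  obtains a b where "a \<in> G" "b \<in> G" "max_filter G z x - e < (a *v z) \<bullet> (b *v x)"
proof -
  have "max_filter G z x - e < max_filter G z x" using assms by simp
  then have "\<exists>t\<in>{p \<bullet> q | p q. p \<in> orbit G z \<and> q \<in> orbit G x}. max_filter G z x - e < t"
    unfolding max_filter_def[of G z x] using less_cSup_iff[OF mf_ne[OF assms(1)] mf_bdd[OF assms(1)]]
    by blast
  then show ?thesis using that unfolding orbit_def by auto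
qed

lemma comp_half: assumes "orth_subgroup G" "e > 0" "max_filter G z y \<le> max_filter G z x"
  shows "\<exists>g\<in>G. \<bar>max_filter G z x - max_filter G z y\<bar> \<le> \<bar>(g *v z) \<bullet> (x - y)\<bar> + e"
proof -
  obtain a b where ab: "a \<in> G" "b \<in> G" "max_filter G z x - e < (a *v z) \<bullet> (b *v x)"
    using mf_approx[OF assms(1,2)] by blast
  have u: "(a *v z) \<bullet> (b *v y) \<le> max_filter G z y" using mf_upper[OF assms(1) ab(1,2)] .
  have "(a *v z) \<bullet> (b *v x) - (a *v z) \<bullet> (b *v y) = (a *v z) \<bullet> (b *v (x - y))"
    by (simp add: matrix_vector_mult_diff_distrib inner_diff_right)
  also have "\<dots> = ((transpose b ** a) *v z) \<bullet> (x - y)"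
    using adj[of b "x - y" "a *v z"]
    by (simp add: inner_commute matrix_vector_mul_assoc[symmetric] del: transpose_matrix_vector)
  finally have "max_filter G z x - max_filter G z y \<le> ((transpose b ** a) *v z) \<bullet> (x - y) + e"
    using ab(3) u by linarith
  moreover have "transpose b ** a \<in> G" using assms(1) ab G_mul G_tr by blast
  ultimately show ?thesis using assms(3) by (intro bexI[of _ "transpose b ** a"]) auto
qed

lemma comp_bound: assumes "orth_subgroup G" "e > 0"
  shows "\<exists>g\<in>G. \<bar>max_filter G z x - max_filter G z y\<bar> \<le> \<bar>(g *v z) \<bullet> (x - y)\<bar> + e"
proof (cases "max_filter G z y \<le> max_filter G z x")
  case True then show ?thesis using comp_half[OF assms] by blast
next
  case False
  then obtain g where "g \<in> G" "\<bar>max_filter G z y - max_filter G z x\<bar> \<le> \<bar>(g *v z) \<bullet> (y - x)\<bar> + e"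
    using comp_half[OF assms, of z x y] by auto
  moreover have "\<bar>(g *v z) \<bullet> (y - x)\<bar> = \<bar>(g *v z) \<bullet> (x - y)\<bar>"
    by (metis abs_minus_cancel inner_minus_right minus_diff_eq)
  ultimately show ?thesis by (metis abs_minus_commute)
qed

lemma S_bdd: assumes "orth_subgroup G"
  shows "bdd_above ((\<lambda>g. spec_norm (col_matrix g z)) ` {g. \<forall>i. g i \<in> G})"
  by (rule bdd_aboveI[where M = "real CARD('d) * real CARD('n) * (\<Sum>c\<in>UNIV. norm (z c))"])
     (auto intro!: col_bound dest: G_orth[OF assms])
    
lemma spec_le_S: assumes "orth_subgroup G" "\<forall>i. g i \<in> G"
  shows "spec_norm (col_matrix g z) \<le> (SUP g \<in> {g. \<forall>i. g i \<in> G}. spec_norm (col_matrix g z))"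
  by (rule cSUP_upper[OF _ S_bdd[OF assms(1)]]) (use assms(2) in auto)

lemma S_nonneg: assumes "orth_subgroup G"
  shows "0 \<le> (SUP g \<in> {g. \<forall>i. g i \<in> G}. spec_norm (col_matrix g (z::'n::finite \<Rightarrow> real^'d)))"
proof -
  have "0 \<le> spec_norm (col_matrix (\<lambda>_. mat 1) z)" unfolding spec_norm_def by (simp add: onorm_pos_le)
  also have "\<dots> \<le> (SUP g \<in> {g. \<forall>i. g i \<in> G}. spec_norm (col_matrix g z))"
    using spec_le_S[OF assms, of "\<lambda>_. mat 1"] G_one[OF assms] by blast
  finally show ?thesis .
qed

lemma lip: fixes z :: "'n::finite \<Rightarrow> real^'d" assumes "orth_subgroup G"
  shows "norm (max_filter_bank G z x - max_filter_bank G z y)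
     \<le> (SUP g \<in> {g. \<forall>i. g i \<in> G}. spec_norm (col_matrix g z)) * norm (x - y)"
proof -
  define S where "S = (SUP g \<in> {g. \<forall>i. g i \<in> G}. spec_norm (col_matrix g z))"
  define C where "C = norm (\<chi> i::'n. (1::real))"
  have C0: "0 \<le> C" unfolding C_def by simp
  have main: "norm (max_filter_bank G z x - max_filter_bank G z y) \<le> S * norm (x - y) + e * C"
    if e: "e > 0" for e
  proof -
    have "\<forall>i. \<exists>g\<in>G. \<bar>max_filter G (z i) x - max_filter G (z i) y\<bar> \<le> \<bar>(g *v z i) \<bullet> (x - y)\<bar> + e"
      using comp_bound[OF assms e] by blast
    then obtain g where g: "\<And>i. g i \<in> G"
      "\<And>i. \<bar>max_filter G (z i) x - max_filter G (z i) y\<bar> \<le> \<bar>(g i *v z i) \<bullet> (x - y)\<bar> + e"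
      by metis
    define w where "w = transpose (col_matrix g z) *v (x - y)"
    have "norm (max_filter_bank G z x - max_filter_bank G z y) \<le> norm ((\<chi> i. \<bar>w $ i\<bar>) + e *\<^sub>R (\<chi> i::'n. (1::real)))"
      by (rule norm_le_componentwise_cart)
         (use g(2) e in \<open>auto simp: max_filter_bank_def w_def colT simp del: transpose_matrix_vector\<close>)
    also have "\<dots> \<le> norm (\<chi> i. \<bar>w $ i\<bar>) + e * C"
      using norm_triangle_ineq e unfolding C_def by (metis abs_of_pos norm_scaleR)
    also have "norm (\<chi> i. \<bar>w $ i\<bar>) \<le> norm w"
      by (rule norm_le_componentwise_cart) simp
    also have "norm w \<le> spec_norm (col_matrix g z) * norm (x - y)"
      unfolding w_def by (rule specT)
    also have "\<dots> \<le> S * norm (x - y)"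
      unfolding S_def by (intro mult_right_mono spec_le_S[OF assms]) (use g in auto)
    finally show ?thesis by simp
  qed
  show ?thesis unfolding S_def[symmetric]
  proof (rule field_le_epsilon)
    fix e :: real assume "e > 0"
    then have "e / (C + 1) > 0" using C0 by simp
    from main[OF this] have "norm (max_filter_bank G z x - max_filter_bank G z y) \<le> S * norm (x - y) + e / (C + 1) * C" .
    moreover have "e / (C + 1) * C \<le> e" using C0 \<open>e > 0\<close> by (simp add: field_simps)
    ultimately show "norm (max_filter_bank G z x - max_filter_bank G z y) \<le> S * norm (x - y) + e" by linarith
  qed
qed

lemma orbit_inv: assumes "orth_subgroup G" "a \<in> G"
  shows "orbit G (a *v x) = orbit G x"
proof
  show "orbit G (a *v x) \<subseteq> orbit G x"
    unfolding orbit_def using G_mul[OF assms(1) _ assms(2)]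
    by (auto simp: matrix_vector_mul_assoc)
  show "orbit G x \<subseteq> orbit G (a *v x)"
  proof
    fix p assume "p \<in> orbit G x"
    then obtain g where g: "g \<in> G" "p = g *v x" unfolding orbit_def by auto
    have "transpose a ** a = mat 1" using G_orth[OF assms] orthogonal_matrix by blast
    then have "p = (g ** transpose a) *v (a *v x)"
      by (metis g(2) matrix_mul_assoc matrix_mul_rid matrix_vector_mul_assoc)
    moreover have "g ** transpose a \<in> G" using G_mul[OF assms(1) g(1) G_tr[OF assms]] .
    ultimately show "p \<in> orbit G (a *v x)" unfolding orbit_def by blast
  qed
qed

lemma mfb_inv: assumes "orth_subgroup G" "a \<in> G"
  shows "max_filter_bank G z (a *v x) = max_filter_bank G z x"
  unfolding max_filter_bank_def max_filter_def using orbit_inv[OF assms] by simp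

lemma ratio_le: fixes z :: "'n::finite \<Rightarrow> real^'d" assumes "orth_subgroup G"
  shows "norm (max_filter_bank G z x - max_filter_bank G z y) / qdist G x y
     \<le> (SUP g \<in> {g. \<forall>i. g i \<in> G}. spec_norm (col_matrix g z))"
proof -
  define S where "S = (SUP g \<in> {g. \<forall>i. g i \<in> G}. spec_norm (col_matrix g z))"
  define Q where "Q = {norm (p - q) | p q. p \<in> orbit G x \<and> q \<in> orbit G y}"
  define D where "D = norm (max_filter_bank G z x - max_filter_bank G z y)"
  have S0: "0 \<le> S" unfolding S_def by (rule S_nonneg[OF assms])
  have Qb: "D \<le> S * t" if "t \<in> Q" for t
  proof -
    obtain a b where ab: "a \<in> G" "b \<in> G" "t = norm (a *v x - b *v y)"
      using \<open>t \<in> Q\<close> unfolding Q_def orbit_def by auto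
    have "D = norm (max_filter_bank G z (a *v x) - max_filter_bank G z (b *v y))"
      unfolding D_def using mfb_inv[OF assms ab(1), of z x] mfb_inv[OF assms ab(2), of z y] by simp
    also have "\<dots> \<le> S * t" unfolding S_def ab(3) by (rule lip[OF assms])
    finally show ?thesis .
  qed
  have Qne: "Q \<noteq> {}" unfolding Q_def orbit_def using G_one[OF assms] by blast
  have qd: "qdist G x y = Inf Q" unfolding qdist_def Q_def ..
  have qd0: "0 \<le> Inf Q" by (rule cInf_greatest[OF Qne]) (auto simp: Q_def)
  have D0: "0 \<le> D" unfolding D_def by simp
  have "D \<le> S * Inf Q"
  proof (cases "S = 0")
    case True
    obtain t where "t \<in> Q" using Qne by blast
    then show ?thesis using Qb[of t] True D0 by simp
  next
    case False
    then have Sp: "S > 0" using S0 by simp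
    have "D / S \<le> Inf Q"
      by (rule cInf_greatest[OF Qne]) (use Qb Sp in \<open>simp add: divide_le_eq mult.commute\<close>)
    then show ?thesis using Sp by (simp add: divide_le_eq mult.commute)
  qed
  then show ?thesis
    unfolding S_def[symmetric] D_def[symmetric] qd
    using qd0 S0 by (cases "Inf Q = 0") (auto simp: divide_le_eq mult.commute)
qed

lemma orbit0: "orth_subgroup G \<Longrightarrow> orbit G 0 = {0}"
  unfolding orbit_def using G_one by auto

lemma mf0: "orth_subgroup G \<Longrightarrow> max_filter G z 0 = 0"
proof -
  assume a: "orth_subgroup G"
  have "{p \<bullet> q | p q. p \<in> orbit G z \<and> q \<in> orbit G 0} = {0}"
    using orbit0[OF a] G_one[OF a] unfolding orbit_def by auto
  then show ?thesis unfolding max_filter_def by simp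
qed

lemma qd0: "orth_subgroup G \<Longrightarrow> qdist G u 0 = norm u"
proof -
  assume a: "orth_subgroup G"
  have "{norm (p - q) | p q. p \<in> orbit G u \<and> q \<in> {0}} = {norm u}"
  proof (intro equalityI subsetI)
    fix t assume "t \<in> {norm (p - q) | p q. p \<in> orbit G u \<and> q \<in> {0}}"
    then obtain g where g: "g \<in> G" "t = norm (g *v u)" unfolding orbit_def by auto
    have "norm (g *v u) = norm u" using orth_norm[OF G_orth[OF a g(1)]] .
    then show "t \<in> {norm u}" using g(2) by simp
  next
    fix t assume "t \<in> {norm u}"
    then have "t = norm (mat 1 *v u - 0)" by simp
    then show "t \<in> {norm (p - q) | p q. p \<in> orbit G u \<and> q \<in> {0}}"
      using G_one[OF a] unfolding orbit_def by blast
  qed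
  then have "{norm (p - q) | p q. p \<in> orbit G u \<and> q \<in> orbit G 0} = {norm u}"
    using orbit0[OF a] by simp
  then show ?thesis unfolding qdist_def by simp
qed

lemma neg_mul: "((- mat 1) ** g) *v (z::real^'d) = - (g *v z)"
proof -
  have "(- mat 1) ** g = - (mat 1 ** g)" by (simp add: matrix_matrix_mult_def vec_eq_iff sum_negf)
  then show ?thesis by (simp add: matrix_vector_mult_def vec_eq_iff sum_negf)
qed

theorem theorem16:
  fixes G :: "(real^'d^'d) set" and z :: "'n::finite \<Rightarrow> real^'d"
  assumes "orth_subgroup G" and "closed_orbits G"
  shows "(SUP (x, y) \<in> {(x, y). orbit G x \<noteq> orbit G y}.
            norm (max_filter_bank G z x - max_filter_bank G z y) / qdist G x y)
         \<le> (SUP g \<in> {g. \<forall>i. g i \<in> G}. spec_norm (col_matrix g z))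
       \<and> ((- mat 1) \<in> G \<longrightarrow>
          (SUP (x, y) \<in> {(x, y). orbit G x \<noteq> orbit G y}.
            norm (max_filter_bank G z x - max_filter_bank G z y) / qdist G x y)
         = (SUP g \<in> {g. \<forall>i. g i \<in> G}. spec_norm (col_matrix g z)))"
proof -
  note G = assms(1)
  define S where "S = (SUP g \<in> {g. \<forall>i. g i \<in> G}. spec_norm (col_matrix g z))"
  define A where "A = {(x, y). orbit G x \<noteq> orbit G (y::real^'d)}"
  define f where "f = (\<lambda>(x, y). norm (max_filter_bank G z x - max_filter_bank G z y) / qdist G x y)"
  define L where "L = (SUP p \<in> A. f p)"
  have Leq: "(SUP (x, y) \<in> {(x, y). orbit G x \<noteq> orbit G y}.
            norm (max_filter_bank G z x - max_filter_bank G z y) / qdist G x y) = L"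
    unfolding L_def A_def f_def ..
  have fle: "f p \<le> S" for p unfolding f_def S_def using ratio_le[OF G] by (auto split: prod.splits)
  have Au: "(u, 0) \<in> A" if "u \<noteq> 0" for u
  proof -
    have "u \<in> orbit G u" unfolding orbit_def using G_one[OF G] by force
    then show ?thesis unfolding A_def using orbit0[OF G] that by auto
  qed
  define e where "e = (\<chi> i::'d. (1::real))"
  have e0: "e \<noteq> 0" unfolding e_def by (simp add: vec_eq_iff)
  have Ane: "A \<noteq> {}" using Au[OF e0] by blast
  have bdd: "bdd_above (f ` A)" using fle by (intro bdd_aboveI) auto
  have part1: "L \<le> S" unfolding L_def by (rule cSUP_least[OF Ane fle])
  have L0: "0 \<le> L"
  proof -
    have "0 \<le> f (e, 0)" unfolding f_def by (simp add: qd0[OF G])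
    also have "\<dots> \<le> L" unfolding L_def by (rule cSUP_upper[OF Au[OF e0] bdd])
    finally show ?thesis .
  qed
  have part2: "S \<le> L" if neg: "(- mat 1) \<in> G"
    unfolding S_def
  proof (rule cSUP_least)
    show "{g. \<forall>i. g i \<in> G} \<noteq> {}" using G_one[OF G] by auto
    fix g :: "'n \<Rightarrow> real^'d^'d" assume "g \<in> {g. \<forall>i. g i \<in> G}"
    then have g: "\<And>i. g i \<in> G" by auto
    define M where "M = col_matrix g z"
    have key: "norm (transpose M *v u) \<le> L * norm u" for u
    proof (cases "u = 0")
      case True then show ?thesis by simp
    next
      case False
      have "f (u, 0) \<le> L" unfolding L_def by (rule cSUP_upper[OF Au[OF False] bdd])
      moreover have "f (u, 0) = norm (max_filter_bank G z u) / norm u"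
        unfolding f_def using mf0[OF G] qd0[OF G] vec_eq_iff[of "\<chi> i::'n. (0::real)" 0]
        by (simp add: max_filter_bank_def)
      ultimately have h: "norm (max_filter_bank G z u) \<le> L * norm u"
        using False by (simp add: divide_le_eq mult.commute)
      have "norm (transpose M *v u) \<le> norm (max_filter_bank G z u)"
      proof (rule norm_le_componentwise_cart)
        fix i
        have c: "(transpose M *v u) $ i = (g i *v z i) \<bullet> u" unfolding M_def by (rule colT)
        have 1: "(g i *v z i) \<bullet> u \<le> max_filter G (z i) u"
          using mf_upper[OF G g G_one[OF G], where z="z i" and x=u] by simp
        have "((- mat 1 ** g i) *v z i) \<bullet> (mat 1 *v u) \<le> max_filter G (z i) u"
          by (rule mf_upper[OF G G_mul[OF G neg g] G_one[OF G]])
        then have 2: "- ((g i *v z i) \<bullet> u) \<le> max_filter G (z i) u"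
          by (simp add: neg_mul)
        show "norm ((transpose M *v u) $ i) \<le> norm (max_filter_bank G z u $ i)"
          unfolding c using 1 2 by (simp add: max_filter_bank_def del: transpose_matrix_vector)
      qed
      with h show ?thesis by linarith
    qed
    show "spec_norm (col_matrix g z) \<le> L"
      unfolding spec_norm_def M_def[symmetric]
    proof (rule onorm_le)
      fix v
      have "norm (M *v v) ^ 2 = v \<bullet> (transpose M *v (M *v v))"
        using adj[of M v "M *v v"] by (simp add: power2_norm_eq_inner del: transpose_matrix_vector)
      also have "\<dots> \<le> norm v * norm (transpose M *v (M *v v))" by (rule norm_cauchy_schwarz)
      also have "\<dots> \<le> norm v * (L * norm (M *v v))" by (intro mult_left_mono key) simp
      finally have h: "norm (M *v v) ^ 2 \<le> L * norm v * norm (M *v v)" by (simp add: ac_simps)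
      show "norm (M *v v) \<le> L * norm v"
      proof (cases "norm (M *v v) = 0")
        case True then show ?thesis using L0 by simp
      next
        case False
        then have "0 < norm (M *v v)" by simp
        with h show ?thesis by (simp add: power2_eq_square)
      qed
    qed
  qed
  show ?thesis unfolding Leq S_def[symmetric] using part1 part2 by auto
qed

end
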